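(* For every LTL formula $\varphi$ (in negation normal form) and every $\star\in\{a,s\}$: (i) $\emptyset\models_\star\varphi$ (empty team property); (ii) if $T\models_\star\varphi$ and $T'\subseteq T$ then $T'\models_\star\varphi$ (downward closure); (iii) for every trace $t$, $\{t\}\models_\star\varphi$ iff $t\models\varphi$ in classical LTL semantics (singleton equivalence). Moreover, for the asynchronous semantics: (iv) if $T\models_a\varphi$ and $T'\models_a\varphi$ then $T\cup T'\models_a\varphi$ (union closure); (v) $T\models_a\varphi$ iff $\{t\}\models_a\varphi$ for all $t\in T$ (flatness); consequently $T\models_a\varphi$ iff $t\models\varphi$ for every $t\in T$. Finally, the synchronous semantics is neither union closed nor flat: for $T=\{\{p\}\emptyset^\omega\}$ and $T'=\{\emptyset\{p\}\emptyset^\omega\}$ one has $T\models_s F p$, $T'\models_s Fp$, but $T\cup T'\not\models_s Fp$.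
   Context: Fix a finite set $AP$ of atomic propositions. A trace is an infinite sequence $t=t(0)t(1)t(2)\cdots\in(2^{AP})^\omega$; for $i\ge 0$, $t[i,\infty)=t(i)t(i+1)\cdots$. A team is a (possibly empty, possibly infinite) set $T$ of traces; $T[i,\infty)=\{t[i,\infty):t\in T\}$, and for a function $k:T\to\mathbb N$, $T[k]=\{t[k(t),\infty):t\in T\}$. LTL formulas are given by $\varphi::=p\mid\neg p\mid\varphi\wedge\varphi\mid\varphi\vee\varphi\mid X\varphi\mid F\varphi\mid G\varphi\mid\varphi U\varphi\mid\varphi R\varphi$ with $p\in AP$; $t\models\varphi$ denotes the usual classical LTL semantics on a single trace. Team semantics $\models_\star$, $\star\in\{a,s\}$: $T\models_\star p$ iff $p\in t(0)$ for all $t\in T$; $T\models_\star\neg p$ iff $p\notin t(0)$ for all $t\in T$; $T\models_\star\psi\wedge\varphi$ iff $T\models_\star\psi$ and $T\models_\star\varphi$; $T\models_\star\psi\vee\varphi$ (splitjunction) iff there are $T_1,T_2$ with $T_1\cup T_2=T$, $T_1\models_\star\psi$, $T_2\models_\star\varphi$; $T\models_\star X\varphi$ iff $T[1,\infty)\models_\star\varphi$. Synchronous: $T\models_s F\varphi$ iff $\exists k\ge0$: $T[k,\infty)\models_s\varphi$; $T\models_s G\varphi$ iff $\forall k\ge0$: $T[k,\infty)\models_s\varphi$; $T\models_s\psi U\varphi$ iff $\exists k$: $T[k,\infty)\models_s\varphi$ and $\forall k'<k$: $T[k',\infty)\models_s\psi$; $T\models_s\psi R\varphi$ iff $\forall k$: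 $T[k,\infty)\models_s\varphi$ or $\exists k'<k$: $T[k',\infty)\models_s\psi$. Asynchronous (time advances independently on each trace): $T\models_a F\varphi$ iff there is $k:T\to\mathbb N$ with $T[k]\models_a\varphi$; $T\models_a G\varphi$ iff $T[k]\models_a\varphi$ for all $k:T\to\mathbb N$; $T\models_a\psi U\varphi$ iff there is $k:T\to\mathbb N$ with $T[k]\models_a\varphi$ such that, with $T_>=\{t\in T:k(t)>0\}$, for every $k':T_>\to\mathbb N$ with $k'(t)<k(t)$ for all $t\in T_>$, $\{t[k'(t),\infty):t\in T_>\}\models_a\psi$; $T\models_a\psi R\varphi$ iff for every $k:T\to\mathbb N$ there are $T_1\cup T_2=T$ with $\{t[k(t),\infty):t\in T_1\}\models_a\varphi$ and some $k':T_2\to\mathbb N$ with $k'(t)<k(t)$ for all $t\in T_2$ and $\{t[k'(t),\infty):t\in T_2\}\models_a\psi$. *)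

theory Defs
  imports Main
begin

type_synonym 'a trace = "nat \<Rightarrow> 'a set"
type_synonym 'a team = "'a trace set"

datatype 'a ltl =
    Prop 'a | NProp 'a
  | And "'a ltl" "'a ltl" | Or "'a ltl" "'a ltl"
  | Next "'a ltl" | Fin "'a ltl" | Glob "'a ltl"
  | Until "'a ltl" "'a ltl" | Release "'a ltl" "'a ltl"

definition suffix :: "nat \<Rightarrow> 'a trace \<Rightarrow> 'a trace" where
  "suffix i t = (\<lambda>n. t (n + i))"

definition tshift :: "nat \<Rightarrow> 'a team \<Rightarrow> 'a team" where
  "tshift i T = suffix i ` T"

definition ashift :: "('a trace \<Rightarrow> nat) \<Rightarrow> 'a team \<Rightarrow> 'a team" where
  "ashift k T = (\<lambda>t. suffix (k t) t) ` T"

fun ltl_sat :: "'a trace \<Rightarrow> 'a ltl \<Rightarrow> bool" where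
  "ltl_sat t (Prop p) = (p \<in> t 0)"
| "ltl_sat t (NProp p) = (p \<notin> t 0)"
| "ltl_sat t (And \<psi> \<phi>) = (ltl_sat t \<psi> \<and> ltl_sat t \<phi>)"
| "ltl_sat t (Or \<psi> \<phi>) = (ltl_sat t \<psi> \<or> ltl_sat t \<phi>)"
| "ltl_sat t (Next \<phi>) = ltl_sat (suffix 1 t) \<phi>"
| "ltl_sat t (Fin \<phi>) = (\<exists>k. ltl_sat (suffix k t) \<phi>)"
| "ltl_sat t (Glob \<phi>) = (\<forall>k. ltl_sat (suffix k t) \<phi>)"
| "ltl_sat t (Until \<psi> \<phi>) =
     (\<exists>k. ltl_sat (suffix k t) \<phi> \<and> (\<forall>k'<k. ltl_sat (suffix k' t) \<psi>))"
| "ltl_sat t (Release \<psi> \<phi>) =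
     (\<forall>k. ltl_sat (suffix k t) \<phi> \<or> (\<exists>k'<k. ltl_sat (suffix k' t) \<psi>))"

fun sync_sat :: "'a team \<Rightarrow> 'a ltl \<Rightarrow> bool" where
  "sync_sat T (Prop p) = (\<forall>t\<in>T. p \<in> t 0)"
| "sync_sat T (NProp p) = (\<forall>t\<in>T. p \<notin> t 0)"
| "sync_sat T (And \<psi> \<phi>) = (sync_sat T \<psi> \<and> sync_sat T \<phi>)"
| "sync_sat T (Or \<psi> \<phi>) =
     (\<exists>T1 T2. T1 \<union> T2 = T \<and> sync_sat T1 \<psi> \<and> sync_sat T2 \<phi>)"
| "sync_sat T (Next \<phi>) = sync_sat (tshift 1 T) \<phi>"
| "sync_sat T (Fin \<phi>) = (\<exists>k. sync_sat (tshift k T) \<phi>)"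
| "sync_sat T (Glob \<phi>) = (\<forall>k. sync_sat (tshift k T) \<phi>)"
| "sync_sat T (Until \<psi> \<phi>) =
     (\<exists>k. sync_sat (tshift k T) \<phi> \<and> (\<forall>k'<k. sync_sat (tshift k' T) \<psi>))"
| "sync_sat T (Release \<psi> \<phi>) =
     (\<forall>k. sync_sat (tshift k T) \<phi> \<or> (\<exists>k'<k. sync_sat (tshift k' T) \<psi>))"

text \<open>Asynchronous team semantics. Functions k : T \<rightarrow> \<nat> are represented by total
  functions on traces; only their values on T matter.\<close>
fun async_sat :: "'a team \<Rightarrow> 'a ltl \<Rightarrow> bool" where
  "async_sat T (Prop p) = (\<forall>t\<in>T. p \<in> t 0)"
| "async_sat T (NProp p) = (\<forall>t\<in>T. p \<notin> t 0)"
| "async_sat T (And \<psi> \<phi>) = (async_sat T \<psi> \<and> async_sat T \<phi>)"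
| "async_sat T (Or \<psi> \<phi>) =
     (\<exists>T1 T2. T1 \<union> T2 = T \<and> async_sat T1 \<psi> \<and> async_sat T2 \<phi>)"
| "async_sat T (Next \<phi>) = async_sat (tshift 1 T) \<phi>"
| "async_sat T (Fin \<phi>) = (\<exists>k. async_sat (ashift k T) \<phi>)"
| "async_sat T (Glob \<phi>) = (\<forall>k. async_sat (ashift k T) \<phi>)"
| "async_sat T (Until \<psi> \<phi>) =
     (\<exists>k. async_sat (ashift k T) \<phi> \<and>
        (\<forall>k'. (\<forall>t\<in>{t\<in>T. k t > 0}. k' t < k t) \<longrightarrow>
              async_sat (ashift k' {t\<in>T. k t > 0}) \<psi>))"
| "async_sat T (Release \<psi> \<phi>) =
     (\<forall>k. \<exists>T1 T2. T1 \<union> T2 = T \<and> async_sat (ashift k T1) \<phi> \<and>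
        (\<exists>k'. (\<forall>t\<in>T2. k' t < k t) \<and> async_sat (ashift k' T2) \<psi>))"

end

theory Submission
  imports Defs
begin

lemma suffix_suffix[simp]: "suffix a (suffix b t) = suffix (a + b) t"
  by (simp add: suffix_def add.assoc)

lemma suffix_0[simp]: "suffix 0 t = t"
  by (simp add: suffix_def)

lemma tshift_single[simp]: "tshift k {t} = {suffix k t}"
  by (simp add: tshift_def)

lemma tshift_empty[simp]: "tshift k {} = {}"
  by (simp add: tshift_def)

lemma ashift_empty[simp]: "ashift k {} = {}"
  by (simp add: ashift_def)

lemma sync_empty: "sync_sat {} \<phi>"
proof (induction \<phi>)
  case (Or \<psi> \<phi>) then show ?case by (simp only: sync_sat.simps) blast
qed simp_all

lemma tmono: "T' \<subseteq> T \<Longrightarrow> tshift k T' \<subseteq> tshift k T"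
  by (simp add: tshift_def image_mono)

lemma sync_down: "sync_sat T \<phi> \<Longrightarrow> T' \<subseteq> T \<Longrightarrow> sync_sat T' \<phi>"
proof (induction \<phi> arbitrary: T T')
  case (Or \<psi> \<phi>)
  then obtain T1 T2 where "T1 \<union> T2 = T" "sync_sat T1 \<psi>" "sync_sat T2 \<phi>" by auto
  then have "(T1 \<inter> T') \<union> (T2 \<inter> T') = T'" "sync_sat (T1 \<inter> T') \<psi>" "sync_sat (T2 \<inter> T') \<phi>"
    using Or by auto
  then show ?case by (simp only: sync_sat.simps) blast
next
  case (Next \<phi>) then show ?case using tmono by (meson sync_sat.simps(5))
next
  case (Fin \<phi>) then show ?case using tmono by (meson sync_sat.simps(6))
next
  case (Glob \<phi>) then show ?case using tmono by (meson sync_sat.simps(7))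
next
  case (Until \<psi> \<phi>) then show ?case using tmono by (meson sync_sat.simps(8))
next
  case (Release \<psi> \<phi>) then show ?case using tmono by (meson sync_sat.simps(9))
qed (simp, blast)+

lemma sync_single: "sync_sat {t} \<phi> \<longleftrightarrow> ltl_sat t \<phi>"
proof (induction \<phi> arbitrary: t)
  case (Or \<psi> \<phi>)
  show ?case
  proof
    assume "sync_sat {t} (Or \<psi> \<phi>)"
    then obtain T1 T2 where h: "T1 \<union> T2 = {t}" "sync_sat T1 \<psi>" "sync_sat T2 \<phi>" by (simp only: sync_sat.simps) blast
    then have "T1 = {t} \<or> T2 = {t}" by blast
    then show "ltl_sat t (Or \<psi> \<phi>)"
    proof
      assume "T1 = {t}" then show ?thesis using h(2) Or.IH(1) by simp
    next
      assume "T2 = {t}" then show ?thesis using h(3) Or.IH(2) by simp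
    qed
  next
    assume "ltl_sat t (Or \<psi> \<phi>)"
    then have "({t} \<union> {} = {t} \<and> sync_sat {t} \<psi> \<and> sync_sat {} \<phi>) \<or>
               ({} \<union> {t} = {t} \<and> sync_sat {} \<psi> \<and> sync_sat {t} \<phi>)"
      using Or.IH sync_empty \<open>ltl_sat t (Or \<psi> \<phi>)\<close> by auto
    then show "sync_sat {t} (Or \<psi> \<phi>)" by (simp only: sync_sat.simps) blast
  qed
qed simp_all

lemma async_flat: "async_sat T \<phi> \<longleftrightarrow> (\<forall>t\<in>T. ltl_sat t \<phi>)"
proof (induction \<phi> arbitrary: T)
  case (Or \<psi> \<phi>)
  show ?case
  proof
    assume "async_sat T (Or \<psi> \<phi>)"
    then obtain T1 T2 where h: "T1 \<union> T2 = T" "async_sat T1 \<psi>" "async_sat T2 \<phi>" by (simp only: async_sat.simps) blast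
    then show "\<forall>t\<in>T. ltl_sat t (Or \<psi> \<phi>)" using Or by auto
  next
    assume "\<forall>t\<in>T. ltl_sat t (Or \<psi> \<phi>)"
    then have "{t\<in>T. ltl_sat t \<psi>} \<union> {t\<in>T. \<not> ltl_sat t \<psi>} = T"
      "async_sat {t\<in>T. ltl_sat t \<psi>} \<psi>" "async_sat {t\<in>T. \<not> ltl_sat t \<psi>} \<phi>"
      using Or by auto
    then show "async_sat T (Or \<psi> \<phi>)" by (simp only: async_sat.simps) blast
  qed
next
  case (Next \<phi>) then show ?case by (simp add: tshift_def)
next
  case (Fin \<phi>)
  show ?case
  proof
    assume "async_sat T (Fin \<phi>)"
    then show "\<forall>t\<in>T. ltl_sat t (Fin \<phi>)" using Fin by (auto simp: ashift_def)
  next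
    assume a: "\<forall>t\<in>T. ltl_sat t (Fin \<phi>)"
    define k where "k t = (SOME n. ltl_sat (suffix n t) \<phi>)" for t
    have "\<forall>t\<in>T. ltl_sat (suffix (k t) t) \<phi>"
      using a unfolding k_def by (auto intro: someI)
    then show "async_sat T (Fin \<phi>)" using Fin by (auto simp: ashift_def)
  qed
next
  case (Glob \<phi>)
  show ?case
  proof
    assume "async_sat T (Glob \<phi>)"
    then have "\<forall>n. async_sat (ashift (\<lambda>_. n) T) \<phi>" by simp
    then show "\<forall>t\<in>T. ltl_sat t (Glob \<phi>)" using Glob by (auto simp: ashift_def)
  next
    assume "\<forall>t\<in>T. ltl_sat t (Glob \<phi>)"
    then show "async_sat T (Glob \<phi>)" using Glob by (auto simp: ashift_def)
  qed
next
  case (Until \<psi> \<phi>)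
  show ?case
  proof
    assume "async_sat T (Until \<psi> \<phi>)"
    then obtain k where k1: "async_sat (ashift k T) \<phi>"
      and k2: "\<And>k'. (\<forall>t\<in>{t\<in>T. k t > 0}. k' t < k t) \<Longrightarrow>
              async_sat (ashift k' {t\<in>T. k t > 0}) \<psi>" by auto
    show "\<forall>t\<in>T. ltl_sat t (Until \<psi> \<phi>)"
    proof
      fix t assume t: "t \<in> T"
      have "ltl_sat (suffix (k t) t) \<phi>" using k1 Until t by (auto simp: ashift_def)
      moreover have "ltl_sat (suffix j t) \<psi>" if j: "j < k t" for j
      proof -
        let ?k' = "\<lambda>s. if s = t then j else k s - 1"
        have "async_sat (ashift ?k' {t\<in>T. k t > 0}) \<psi>"
          using j by (intro k2) auto
        then show ?thesis using Until t j by (auto simp: ashift_def)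
      qed
      ultimately show "ltl_sat t (Until \<psi> \<phi>)" by auto
    qed
  next
    assume a: "\<forall>t\<in>T. ltl_sat t (Until \<psi> \<phi>)"
    define k where "k t = (SOME n. ltl_sat (suffix n t) \<phi> \<and> (\<forall>k'<n. ltl_sat (suffix k' t) \<psi>))" for t
    have kk: "\<forall>t\<in>T. ltl_sat (suffix (k t) t) \<phi> \<and> (\<forall>k'<k t. ltl_sat (suffix k' t) \<psi>)"
    proof
      fix t assume "t \<in> T"
      then have "\<exists>n. ltl_sat (suffix n t) \<phi> \<and> (\<forall>k'<n. ltl_sat (suffix k' t) \<psi>)" using a by simp
      then show "ltl_sat (suffix (k t) t) \<phi> \<and> (\<forall>k'<k t. ltl_sat (suffix k' t) \<psi>)"
        unfolding k_def by (rule someI_ex)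
    qed
    show "async_sat T (Until \<psi> \<phi>)"
      apply simp
      apply (rule exI[of _ k])
      using kk Until by (auto simp: ashift_def)
  qed
next
  case (Release \<psi> \<phi>)
  show ?case
  proof
    assume a: "async_sat T (Release \<psi> \<phi>)"
    show "\<forall>t\<in>T. ltl_sat t (Release \<psi> \<phi>)"
    proof (intro ballI)
      fix t assume t: "t \<in> T"
      show "ltl_sat t (Release \<psi> \<phi>)"
      proof (simp, intro allI)
        fix n
        obtain T1 T2 k' where h: "T1 \<union> T2 = T" "async_sat (ashift (\<lambda>_. n) T1) \<phi>"
          "\<forall>t\<in>T2. k' t < n" "async_sat (ashift k' T2) \<psi>"
        proof -
          from a have "\<exists>T1 T2. T1 \<union> T2 = T \<and> async_sat (ashift (\<lambda>_. n) T1) \<phi> \<and>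
            (\<exists>k'. (\<forall>t\<in>T2. k' t < n) \<and> async_sat (ashift k' T2) \<psi>)"
            by (simp only: async_sat.simps)
          then show ?thesis using that by blast
        qed
        show "ltl_sat (suffix n t) \<phi> \<or> (\<exists>k'<n. ltl_sat (suffix k' t) \<psi>)"
        proof (cases "t \<in> T1")
          case True then show ?thesis using h Release by (auto simp: ashift_def)
        next
          case False then have "t \<in> T2" using h t by auto
          then show ?thesis using h Release by (auto simp: ashift_def)
        qed
      qed
    qed
  next
    assume a: "\<forall>t\<in>T. ltl_sat t (Release \<psi> \<phi>)"
    show "async_sat T (Release \<psi> \<phi>)"
    proof (simp only: async_sat.simps, intro allI)
      fix k :: "'a trace \<Rightarrow> nat"
      define T1 where "T1 = {t\<in>T. ltl_sat (suffix (k t) t) \<phi>}"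
      define T2 where "T2 = T - T1"
      define k' where "k' t = (SOME j. j < k t \<and> ltl_sat (suffix j t) \<psi>)" for t
      have "\<forall>t\<in>T2. k' t < k t \<and> ltl_sat (suffix (k' t) t) \<psi>"
      proof
        fix t assume "t \<in> T2"
        then have "\<exists>j. j < k t \<and> ltl_sat (suffix j t) \<psi>" using a unfolding T2_def T1_def by auto
        then show "k' t < k t \<and> ltl_sat (suffix (k' t) t) \<psi>" unfolding k'_def by (rule someI_ex)
      qed
      then have h1: "\<forall>t\<in>T2. k' t < k t" and h2: "async_sat (ashift k' T2) \<psi>"
        using Release by (auto simp: ashift_def)
      have h3: "T1 \<union> T2 = T" unfolding T1_def T2_def by blast
      have h4: "async_sat (ashift k T1) \<phi>" using Release by (auto simp: T1_def ashift_def)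
      show "\<exists>T1 T2. T1 \<union> T2 = T \<and> async_sat (ashift k T1) \<phi> \<and>
        (\<exists>k'. (\<forall>t\<in>T2. k' t < k t) \<and> async_sat (ashift k' T2) \<psi>)"
        using h1 h2 h3 h4 by blast
    qed
  qed
qed auto

theorem mainTheorem1:
  fixes dummy :: "'a::finite"
  shows
   "(\<forall>\<phi>::'a ltl. sync_sat {} \<phi> \<and> async_sat {} \<phi>)
  \<and> (\<forall>(\<phi>::'a ltl) T T'. sync_sat T \<phi> \<and> T' \<subseteq> T \<longrightarrow> sync_sat T' \<phi>)
  \<and> (\<forall>(\<phi>::'a ltl) T T'. async_sat T \<phi> \<and> T' \<subseteq> T \<longrightarrow> async_sat T' \<phi>)
  \<and> (\<forall>(\<phi>::'a ltl) t. sync_sat {t} \<phi> \<longleftrightarrow> ltl_sat t \<phi>)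
  \<and> (\<forall>(\<phi>::'a ltl) t. async_sat {t} \<phi> \<longleftrightarrow> ltl_sat t \<phi>)
  \<and> (\<forall>(\<phi>::'a ltl) T T'. async_sat T \<phi> \<and> async_sat T' \<phi> \<longrightarrow> async_sat (T \<union> T') \<phi>)
  \<and> (\<forall>(\<phi>::'a ltl) T. async_sat T \<phi> \<longleftrightarrow> (\<forall>t\<in>T. async_sat {t} \<phi>))
  \<and> (\<forall>(\<phi>::'a ltl) T. async_sat T \<phi> \<longleftrightarrow> (\<forall>t\<in>T. ltl_sat t \<phi>))
  \<and> (\<forall>p::'a.
       let t1 = (\<lambda>n::nat. if n = 0 then {p} else {});
           t2 = (\<lambda>n::nat. if n = 1 then {p} else {})
       in sync_sat {t1} (Fin (Prop p)) \<and> sync_sat {t2} (Fin (Prop p))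
          \<and> \<not> sync_sat ({t1} \<union> {t2}) (Fin (Prop p)))"
proof -
  have cex: "sync_sat {t1} (Fin (Prop p)) \<and> sync_sat {t2} (Fin (Prop p))
          \<and> \<not> sync_sat ({t1} \<union> {t2}) (Fin (Prop p))"
    if "t1 = (\<lambda>n::nat. if n = 0 then {p} else {})" "t2 = (\<lambda>n::nat. if n = 1 then {p} else {})"
    for p :: 'a and t1 t2
  proof -
    have "sync_sat {t1} (Fin (Prop p))"
      using that by (auto intro!: exI[of _ 0])
    moreover have "sync_sat {t2} (Fin (Prop p))"
      using that by (auto simp: suffix_def intro!: exI[of _ 1])
    moreover have "\<not> sync_sat ({t1} \<union> {t2}) (Fin (Prop p))"
    proof
      assume "sync_sat ({t1} \<union> {t2}) (Fin (Prop p))"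
      then obtain k where "p \<in> suffix k t1 0" "p \<in> suffix k t2 0"
        by (auto simp: tshift_def)
      then show False using that by (auto simp: suffix_def split: if_splits)
    qed
    ultimately show ?thesis by blast
  qed
  have a1: "\<forall>\<phi>::'a ltl. sync_sat {} \<phi> \<and> async_sat {} \<phi>"
    by (simp add: sync_empty async_flat)
  have a2: "\<forall>(\<phi>::'a ltl) T T'. async_sat T \<phi> \<and> T' \<subseteq> T \<longrightarrow> async_sat T' \<phi>"
    by (auto simp: async_flat)
  have a3: "\<forall>(\<phi>::'a ltl) t. async_sat {t} \<phi> \<longleftrightarrow> ltl_sat t \<phi>"
    by (simp add: async_flat)
  have a4: "\<forall>(\<phi>::'a ltl) T T'. async_sat T \<phi> \<and> async_sat T' \<phi> \<longrightarrow> async_sat (T \<union> T') \<phi>"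
    by (auto simp: async_flat)
  have a5: "\<forall>(\<phi>::'a ltl) T. async_sat T \<phi> \<longleftrightarrow> (\<forall>t\<in>T. async_sat {t} \<phi>)"
    by (simp add: async_flat)
  have a6: "\<forall>(\<phi>::'a ltl) T T'. sync_sat T \<phi> \<and> T' \<subseteq> T \<longrightarrow> sync_sat T' \<phi>"
    using sync_down by blast
  have a7: "\<forall>(\<phi>::'a ltl) t. sync_sat {t} \<phi> \<longleftrightarrow> ltl_sat t \<phi>"
    by (simp add: sync_single)
  have a8: "\<forall>(\<phi>::'a ltl) T. async_sat T \<phi> \<longleftrightarrow> (\<forall>t\<in>T. ltl_sat t \<phi>)"
    by (simp add: async_flat)
  have a9: "\<forall>p::'a.
       let t1 = (\<lambda>n::nat. if n = 0 then {p} else {});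
           t2 = (\<lambda>n::nat. if n = 1 then {p} else {})
       in sync_sat {t1} (Fin (Prop p)) \<and> sync_sat {t2} (Fin (Prop p))
          \<and> \<not> sync_sat ({t1} \<union> {t2}) (Fin (Prop p))"
  proof
    fix p :: 'a
    show "let t1 = (\<lambda>n::nat. if n = 0 then {p} else {});
           t2 = (\<lambda>n::nat. if n = 1 then {p} else {})
       in sync_sat {t1} (Fin (Prop p)) \<and> sync_sat {t2} (Fin (Prop p))
          \<and> \<not> sync_sat ({t1} \<union> {t2}) (Fin (Prop p))"
      unfolding Let_def by (rule cex[OF refl refl])
  qed
  show ?thesis
    using a1 a2 a3 a4 a5 a6 a7 a8 a9 by (intro conjI)
qed

end
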